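(* Let $X$ and $Y$ be $n\times n$ positive semidefinite Hermitian matrices whose Thompson metric $d=d_T(X,Y)$ is finite. Then $$\|X-Y\|_2\;\le\;\frac{e^d-1}{\sqrt{e^{2d}+1}}\sqrt{\|X\|_2^2+\|Y\|_2^2}\;\le\;2^{\frac12}\,\frac{e^d-1}{\sqrt{e^{2d}+1}}\,\max\big[\|X\|_2,\|Y\|_2\big],$$ where $\|\cdot\|_2$ is the Frobenius norm.
   Context: For Hermitian matrices $A,B$, write $A\le B$ (Löwner order) if $B-A$ is positive semidefinite. For positive semidefinite $X,Y$, the Thompson metric is $d_T(X,Y)=\inf\{\log\alpha:\ \alpha\ge1,\ X\le\alpha Y,\ Y\le\alpha X\}$, with $d_T(X,Y)=+\infty$ if no such $\alpha$ exists. Equivalently, $d_T(X,Y)=\log\max\{M(X/Y),M(Y/X)\}$, where $M(X/Y)=\inf\{\lambda>0:X\le\lambda Y\}$. The Frobenius norm is $\|A\|_2=\sqrt{\operatorname{tr}(A^*A)}$, the Schatten $2$-norm. *)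

theory Defs
  imports "HOL-Analysis.Analysis"
begin

definition hermitian :: "complex^'n^'n \<Rightarrow> bool" where
  "hermitian A \<longleftrightarrow> (\<forall>i j. A $ i $ j = cnj (A $ j $ i))"

definition qform :: "complex^'n^'n \<Rightarrow> complex^'n \<Rightarrow> complex" where
  "qform A x = (\<Sum>i\<in>UNIV. \<Sum>j\<in>UNIV. cnj (x $ i) * A $ i $ j * x $ j)"

definition psd :: "complex^'n^'n \<Rightarrow> bool" where
  "psd A \<longleftrightarrow> hermitian A \<and> (\<forall>x. Im (qform A x) = 0 \<and> Re (qform A x) \<ge> 0)"

definition loewner_le :: "complex^'n^'n \<Rightarrow> complex^'n^'n \<Rightarrow> bool" where
  "loewner_le A B \<longleftrightarrow> psd (B - A)"

text \<open>Thompson metric, as an extended real (\<infinity> if no admissible \<alpha>).\<close>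
definition thompson :: "complex^'n^'n \<Rightarrow> complex^'n^'n \<Rightarrow> ereal" where
  "thompson X Y = Inf ((\<lambda>\<alpha>. ereal (ln \<alpha>)) ` {\<alpha>::real. \<alpha> \<ge> 1 \<and>
      loewner_le X (\<alpha> *\<^sub>R Y) \<and> loewner_le Y (\<alpha> *\<^sub>R X)})"

definition frob :: "complex^'n^'n \<Rightarrow> real" where
  "frob A = sqrt (\<Sum>i\<in>UNIV. \<Sum>j\<in>UNIV. (cmod (A $ i $ j))\<^sup>2)"

end

theory Submission
  imports Defs
begin


definition QF :: "'a set \<Rightarrow> ('a\<Rightarrow>'a\<Rightarrow>complex) \<Rightarrow> ('a\<Rightarrow>complex) \<Rightarrow> complex" where
  "QF I A x = (\<Sum>i\<in>I. \<Sum>j\<in>I. cnj (x i) * A i j * x j)"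
definition herm_on :: "'a set \<Rightarrow> ('a\<Rightarrow>'a\<Rightarrow>complex) \<Rightarrow> bool" where
  "herm_on I A \<longleftrightarrow> (\<forall>i\<in>I. \<forall>j\<in>I. A i j = cnj (A j i))"
definition pd_on :: "real \<Rightarrow> 'a set \<Rightarrow> ('a\<Rightarrow>'a\<Rightarrow>complex) \<Rightarrow> bool" where
  "pd_on e I A \<longleftrightarrow> herm_on I A \<and> (\<forall>x. Re (QF I A x) \<ge> e * (\<Sum>i\<in>I. (cmod (x i))\<^sup>2))"
definition TR :: "'a set \<Rightarrow> ('a\<Rightarrow>'a\<Rightarrow>complex) \<Rightarrow> ('a\<Rightarrow>'a\<Rightarrow>complex) \<Rightarrow> complex" where
  "TR I A B = (\<Sum>i\<in>I. \<Sum>j\<in>I. A i j * B j i)"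

lemma QF_insert:
  assumes "finite F" "k \<notin> F"
  shows "QF (insert k F) A y = cnj(y k)*A k k*y k + cnj(y k) * (\<Sum>j\<in>F. A k j * y j)
     + (\<Sum>i\<in>F. cnj(y i) * A i k) * y k + QF F A y"
  using assms by (simp add: QF_def sum.insert sum.distrib sum_distrib_left sum_distrib_right algebra_simps)

lemma QF_zero_out:
  assumes "finite F" "k \<notin> F" "\<And>j. j \<in> F \<Longrightarrow> y j = 0"
  shows "QF (insert k F) A y = cnj(y k)*A k k*y k"
  using assms by (simp add: QF_insert QF_def)

lemma QF_zero_k:
  assumes "finite F" "k \<notin> F" "y k = 0"
  shows "QF (insert k F) A y = QF F A y"
  using assms by (simp add: QF_insert)

lemma key:
  assumes "finite F" "e > 0"
  shows "pd_on e F A \<Longrightarrow> pd_on 0 F B \<Longrightarrow> Re (TR F A B) \<ge> 0"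
  using assms(1)
proof (induction F arbitrary: A B rule: finite_induct)
  case empty
  then show ?case by (simp add: TR_def)
next
  case (insert k F)
  have hA: "herm_on (insert k F) A" and pA: "\<And>x. Re (QF (insert k F) A x) \<ge> e * (\<Sum>i\<in>insert k F. (cmod (x i))\<^sup>2)"
    using insert.prems by (auto simp: pd_on_def)
  have hB: "herm_on (insert k F) B" and pB: "\<And>x. Re (QF (insert k F) B x) \<ge> 0"
    using insert.prems by (auto simp: pd_on_def)
  define a where "a = A k k"
  have aR: "a = of_real (Re a)"
  proof -
    have "a = cnj a" using hA by (simp add: herm_on_def a_def)
    then show ?thesis by (metis Reals_cnj_iff complex_is_Real_iff of_real_Re)
  qed
  have ae: "Re a \<ge> e"
  proof -
    define x where "x = (\<lambda>i. if i = k then (1::complex) else 0)"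
    have "QF (insert k F) A x = a" using insert.hyps
      by (subst QF_zero_out) (auto simp: x_def a_def)
    moreover have "(\<Sum>i\<in>insert k F. (cmod (x i))\<^sup>2) = 1" using insert.hyps
      by (simp add: x_def) (rule sum.neutral, auto)
    ultimately show ?thesis using pA[of x] by simp
  qed
  have a0: "a \<noteq> 0" using ae \<open>e > 0\<close> by auto
  have ca: "cnj a = a" using aR by (metis complex_cnj_complex_of_real)
  define A' where "A' = (\<lambda>i j. A i j - A i k * A k j / a)"
  have hA': "herm_on F A'"
    unfolding herm_on_def
  proof (intro ballI)
    fix i j assume "i \<in> F" "j \<in> F"
    then have "A i j = cnj (A j i)" "A i k = cnj (A k i)" "A k j = cnj (A j k)"
      using hA \<open>i \<in> F\<close> \<open>j \<in> F\<close> unfolding herm_on_def by blast+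
    then show "A' i j = cnj (A' j i)" unfolding A'_def by (simp add: ca)
  qed
  have pA': "Re (QF F A' x) \<ge> e * (\<Sum>i\<in>F. (cmod (x i))\<^sup>2)" for x
  proof -
    define s where "s = (\<Sum>j\<in>F. A k j * x j)"
    define y where "y = (\<lambda>i. if i = k then - s / a else x i)"
    have yF: "\<And>i. i \<in> F \<Longrightarrow> y i = x i" using insert.hyps by (auto simp: y_def)
    have s1: "(\<Sum>j\<in>F. A k j * y j) = s" unfolding s_def by (rule sum.cong) (auto simp: yF)
    have s2: "(\<Sum>i\<in>F. cnj(y i) * A i k) = cnj s" unfolding s_def
    proof (subst cnj_sum, rule sum.cong)
      fix i assume "i \<in> F"
      then have "A i k = cnj (A k i)" using hA unfolding herm_on_def by blast
      then show "cnj (y i) * A i k = cnj (A k i * x i)" using yF \<open>i \<in> F\<close> by simp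
    qed simp
    have q1: "QF F A y = QF F A x" unfolding QF_def by (intro sum.cong) (auto simp: yF)
    have q2: "QF F A' x = QF F A x - cnj s * s / a"
    proof -
      have "QF F A' x = QF F A x - (\<Sum>i\<in>F. \<Sum>j\<in>F. (cnj (x i) * A i k) * (A k j * x j) / a)"
        unfolding QF_def A'_def by (simp add: sum_subtractf[symmetric] algebra_simps)
      also have "(\<Sum>i\<in>F. \<Sum>j\<in>F. (cnj (x i) * A i k) * (A k j * x j) / a)
          = (\<Sum>i\<in>F. cnj (x i) * A i k) * s / a"
        unfolding s_def by (simp add: sum_distrib_left sum_distrib_right sum_divide_distrib) (rule sum.swap)
      also have "(\<Sum>i\<in>F. cnj (x i) * A i k) = cnj s" using s2 yF by simp
      finally show ?thesis .
    qed
    have "QF (insert k F) A y = cnj (y k) * a * y k + cnj (y k) * s + cnj s * y k + QF F A x"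
      using insert.hyps by (simp add: QF_insert s1 s2 q1 a_def)
    also have "y k = - s / a" by (simp add: y_def)
    finally have "QF (insert k F) A y = QF F A' x"
      using a0 ca by (simp add: q2 field_simps)
    moreover have "(\<Sum>i\<in>insert k F. (cmod (y i))\<^sup>2) \<ge> (\<Sum>i\<in>F. (cmod (x i))\<^sup>2)"
      using insert.hyps yF by simp
    ultimately show ?thesis using pA[of y] \<open>e > 0\<close>
      by (smt (verit) mult_left_mono)
  qed
  have pdA': "pd_on e F A'" using hA' pA' by (simp add: pd_on_def)
  have pdB: "pd_on 0 F B"
  proof -
    have "herm_on F B" using hB unfolding herm_on_def by blast
    moreover have "Re (QF F B x) \<ge> 0" for x
    proof -
      define y where "y = (\<lambda>i. if i = k then 0 else x i)"
      have "QF F B y = QF F B x" unfolding QF_def y_def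
        using insert.hyps by (intro sum.cong) auto
      then show ?thesis using pB[of y] QF_zero_k[OF insert.hyps, of y B] by (simp add: y_def)
    qed
    ultimately show ?thesis by (simp add: pd_on_def)
  qed
  have IH: "Re (TR F A' B) \<ge> 0" using insert.IH[OF pdA' pdB] .
  define c where "c = (\<lambda>j. A j k)"
  have A'k1: "A' k j = 0" for j using a0 by (simp add: A'_def a_def)
  have A'k2: "A' i k = 0" for i using a0 by (simp add: A'_def a_def)
  have "TR (insert k F) A B = TR (insert k F) A' B + (\<Sum>i\<in>insert k F. \<Sum>j\<in>insert k F. A i k * A k j * B j i) / a"
    unfolding TR_def A'_def by (simp add: sum_divide_distrib sum.distrib[symmetric] algebra_simps diff_divide_distrib)
  also have "TR (insert k F) A' B = TR F A' B"
    using insert.hyps by (simp add: TR_def A'k1 A'k2)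
  also have "(\<Sum>i\<in>insert k F. \<Sum>j\<in>insert k F. A i k * A k j * B j i) = QF (insert k F) B c"
  proof -
    have "(\<Sum>i\<in>insert k F. \<Sum>j\<in>insert k F. A i k * A k j * B j i)
        = (\<Sum>j\<in>insert k F. \<Sum>i\<in>insert k F. A i k * A k j * B j i)" by (rule sum.swap)
    also have "\<dots> = QF (insert k F) B c" unfolding QF_def c_def
    proof (intro sum.cong refl)
      fix i j assume "i \<in> insert k F" "j \<in> insert k F"
      then have "A j k = cnj (A k j)" using hA unfolding herm_on_def by blast
      then show "A i k * A k j * B j i = cnj (A j k) * B j i * A i k" by simp
    qed
    finally show ?thesis .
  qed
  finally have "Re (TR (insert k F) A B) = Re (TR F A' B) + Re (QF (insert k F) B c) / Re a"
    by (metis Re_divide_of_real aR plus_complex.sel(1))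
  then show ?case using IH pB[of c] ae \<open>e > 0\<close> by simp
qed


lemma psd_pd:
  fixes X :: "complex^'n^'n"
  assumes "psd X" shows "pd_on 0 UNIV (\<lambda>i j. X$i$j)"
proof -
  have "hermitian X" and q: "\<And>x. Re (qform X x) \<ge> 0" using assms by (auto simp: psd_def)
  then have "herm_on UNIV (\<lambda>i j. X$i$j)" unfolding herm_on_def hermitian_def by blast
  moreover have "Re (QF UNIV (\<lambda>i j. X$i$j) x) \<ge> 0" for x :: "'n \<Rightarrow> complex"
  proof -
    have "QF UNIV (\<lambda>i j. X$i$j) x = qform X (\<chi> i. x i)" by (simp add: QF_def qform_def)
    then show ?thesis using q by simp
  qed
  ultimately show ?thesis unfolding pd_on_def by simp
qed

lemma eps_lemma:
  fixes T t :: real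
  assumes "t \<ge> 0" "\<And>e. e > 0 \<Longrightarrow> T + e * t \<ge> 0"
  shows "T \<ge> 0"
proof (rule ccontr)
  assume "\<not> T \<ge> 0"
  then have T: "T < 0" by simp
  define e where "e = - T / (t + 1)"
  have e: "e > 0" unfolding e_def using T assms(1) by (intro divide_pos_pos) auto
  have "T + e * t = T / (t + 1)" using assms(1) by (simp add: e_def field_simps)
  also have "\<dots> < 0" using T assms(1) by (intro divide_neg_pos) auto
  finally show False using assms(2)[OF e] by simp
qed


lemma nsq: "cnj z * z = (complex_of_real (cmod z))^2"
  by (metis complex_norm_square mult.commute of_real_power)
lemma dsum: fixes c :: complex shows "(\<Sum>j\<in>(UNIV::'n::finite set). f j * (if i = j then c else 0) * g j) = f i * c * g i"
proof -
  have "(\<Sum>j\<in>(UNIV::'n set). f j * (if i = j then c else 0) * g j) = (\<Sum>j\<in>UNIV. if i = j then f j * c * g j else 0)"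
    by (rule sum.cong) auto
  then show ?thesis by simp
qed
lemma dsum2: fixes c :: complex shows "(\<Sum>j\<in>(UNIV::'n::finite set). (if i = j then c else 0) * g j) = c * g i"
  using dsum[of "\<lambda>_. 1" i c g] by simp

lemma trace_nonneg:
  fixes P R :: "complex^'n^'n"
  assumes "psd P" "psd R"
  shows "Re (\<Sum>i\<in>UNIV. \<Sum>j\<in>UNIV. P$i$j * R$j$i) \<ge> 0"
proof -
  have pP: "pd_on 0 UNIV (\<lambda>i j. P$i$j)" and pR: "pd_on 0 UNIV (\<lambda>i j. R$i$j)"
    using psd_pd assms by blast+
  have Rii: "Re (R$i$i) \<ge> 0" for i
  proof -
    have "Re (QF UNIV (\<lambda>i j. R$i$j) (\<lambda>j. if j = i then 1 else 0)) \<ge> 0"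
      using pR unfolding pd_on_def by auto
    moreover have "QF UNIV (\<lambda>i j. R$i$j) (\<lambda>j. if j = i then 1 else 0) = R$i$i"
    proof -
      have U: "UNIV = insert i (UNIV - {i})" by auto
      show ?thesis by (subst U, subst QF_zero_out) auto
    qed
    ultimately show ?thesis by simp
  qed
  define t where "t = Re (\<Sum>i\<in>UNIV. R$i$i)"
  have t0: "t \<ge> 0" unfolding t_def Re_sum by (intro sum_nonneg Rii)
  show ?thesis
  proof (rule eps_lemma[OF t0])
    fix e :: real assume e: "e > 0"
    define A where "A = (\<lambda>i j. P$i$j + (if i = j then of_real e else 0))"
    have hP: "herm_on UNIV (\<lambda>i j. P$i$j)" using pP by (simp add: pd_on_def)
    have "herm_on UNIV A" unfolding herm_on_def A_def
    proof (intro ballI)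
      fix i j :: 'n
      have "P$i$j = cnj (P$j$i)" using hP unfolding herm_on_def by blast
      then show "P $ i $ j + (if i = j then complex_of_real e else 0) =
           cnj (P $ j $ i + (if j = i then complex_of_real e else 0))" by auto
    qed
    moreover have "Re (QF UNIV A x) \<ge> e * (\<Sum>i\<in>UNIV. (cmod (x i))\<^sup>2)" for x
    proof -
      have "QF UNIV A x = QF UNIV (\<lambda>i j. P$i$j) x + (\<Sum>i\<in>UNIV. cnj (x i) * of_real e * x i)"
        unfolding QF_def A_def by (simp add: distrib_left distrib_right sum.distrib dsum)
      also have "(\<Sum>i\<in>UNIV. cnj (x i) * of_real e * x i) = of_real (e * (\<Sum>i\<in>UNIV. (cmod (x i))\<^sup>2))"
        by (simp add: sum_distrib_left nsq[symmetric] mult.commute mult.left_commute)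
      finally have "Re (QF UNIV A x) = Re (QF UNIV (\<lambda>i j. P$i$j) x) + e * (\<Sum>i\<in>UNIV. (cmod (x i))\<^sup>2)"
        by simp
      moreover have "Re (QF UNIV (\<lambda>i j. P$i$j) x) \<ge> 0" using pP by (simp add: pd_on_def)
      ultimately show ?thesis by simp
    qed
    ultimately have pA: "pd_on e UNIV A" by (simp add: pd_on_def)
    have "Re (TR UNIV A (\<lambda>i j. R$i$j)) \<ge> 0" by (rule key[OF finite e pA pR])
    moreover have "TR UNIV A (\<lambda>i j. R$i$j) = (\<Sum>i\<in>UNIV. \<Sum>j\<in>UNIV. P$i$j * R$j$i) + of_real e * (\<Sum>i\<in>UNIV. R$i$i)"
      unfolding TR_def A_def by (simp add: distrib_right sum.distrib sum_distrib_left dsum2)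
    ultimately show "Re (\<Sum>i\<in>UNIV. \<Sum>j\<in>UNIV. P$i$j * R$j$i) + e * t \<ge> 0"
      by (simp add: t_def)
  qed
qed


lemma qform_diff: "qform (A - B) x = qform A x - qform B x"
  by (simp add: qform_def sum_subtractf[symmetric] algebra_simps)

lemma comp_scale: "(r *\<^sub>R A)$i$j = of_real r * A$i$j"
  unfolding vector_scaleR_component by (rule scaleR_conv_of_real)

lemma qform_scale: "qform (r *\<^sub>R A) x = of_real r * qform A x"
  unfolding qform_def comp_scale by (simp add: sum_distrib_left algebra_simps)

lemma herm_comb:
  assumes hA: "hermitian A" and hB: "hermitian B" shows "hermitian (r *\<^sub>R A - B)"
  unfolding hermitian_def
proof (intro allI)
  fix i j
  have "A$i$j = cnj (A$j$i)" "B$i$j = cnj (B$j$i)" using hA hB unfolding hermitian_def by blast+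
  then show "(r *\<^sub>R A - B) $ i $ j = cnj ((r *\<^sub>R A - B) $ j $ i)" by (simp add: comp_scale)
qed

lemma psd_comb_iff:
  assumes "psd X" "psd Y"
  shows "psd (r *\<^sub>R Y - X) \<longleftrightarrow> (\<forall>x. Re (qform X x) \<le> r * Re (qform Y x))"
proof -
  have h: "hermitian (r *\<^sub>R Y - X)" using assms by (simp add: psd_def herm_comb)
  have iX: "Im (qform X x) = 0" and iY: "Im (qform Y x) = 0" for x
    using assms by (auto simp: psd_def)
  show ?thesis unfolding psd_def using h iX iY
    by (auto simp: qform_diff qform_scale)
qed

lemma lim_lemma:
  fixes a b c :: real
  assumes "a \<ge> 0" "\<And>g. g > c \<Longrightarrow> b \<le> g * a"
  shows "b \<le> c * a"
proof (rule ccontr)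
  assume "\<not> b \<le> c * a"
  then have b: "b > c * a" by simp
  show False
  proof (cases "a = 0")
    case True
    then show ?thesis using assms(2)[of "c+1"] b by simp
  next
    case False
    then have a: "a > 0" using assms(1) by simp
    define g where "g = (c + b / a) / 2"
    have "c < b / a" using a b by (simp add: field_simps)
    then have "g > c" by (simp add: g_def)
    moreover have "g * a < b" using a b by (simp add: g_def field_simps)
    ultimately show False using assms(2)[of g] by simp
  qed
qed

lemma attain:
  fixes X Y :: "complex^'n^'n" and d :: real
  assumes pX: "psd X" and pY: "psd Y"
    and th: "thompson X Y = ereal d"
  shows "d \<ge> 0 \<and> psd (exp d *\<^sub>R Y - X) \<and> psd (exp d *\<^sub>R X - Y)"
proof -
  define S where "S = {\<alpha>::real. \<alpha> \<ge> 1 \<and> loewner_le X (\<alpha> *\<^sub>R Y) \<and> loewner_le Y (\<alpha> *\<^sub>R X)}"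
  have th': "Inf ((\<lambda>\<alpha>. ereal (ln \<alpha>)) ` S) = ereal d" using th by (simp add: thompson_def S_def)
  have d0: "d \<ge> 0"
  proof -
    have "ereal 0 \<le> Inf ((\<lambda>\<alpha>. ereal (ln \<alpha>)) ` S)"
      by (rule Inf_greatest) (auto simp: S_def)
    then show ?thesis using th' by simp
  qed
  have Sdef: "\<beta> \<in> S \<longleftrightarrow> \<beta> \<ge> 1 \<and> (\<forall>x. Re (qform X x) \<le> \<beta> * Re (qform Y x))
        \<and> (\<forall>x. Re (qform Y x) \<le> \<beta> * Re (qform X x))" for \<beta>
    unfolding S_def loewner_le_def using psd_comb_iff[OF pX pY] psd_comb_iff[OF pY pX] by auto
  have below: "\<exists>\<beta>\<in>S. \<beta> < g" if "g > exp d" for g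
  proof -
    have gp: "g > 0" using that by (smt (verit) exp_gt_zero)
    have "d < ln g" using that gp by (metis exp_less_cancel_iff exp_ln)
    then have "Inf ((\<lambda>\<alpha>. ereal (ln \<alpha>)) ` S) < ereal (ln g)" using th' by simp
    then obtain \<beta> where b: "\<beta> \<in> S" "ereal (ln \<beta>) < ereal (ln g)" by (auto simp: Inf_less_iff)
    have "\<beta> \<ge> 1" using b(1) Sdef by blast
    then have "\<beta> < g" using b(2) gp by simp
    then show ?thesis using b(1) by blast
  qed
  have qY: "Re (qform Y x) \<ge> 0" and qX: "Re (qform X x) \<ge> 0" for x using pX pY by (auto simp: psd_def)
  have c1: "Re (qform X x) \<le> exp d * Re (qform Y x)" for x
  proof (rule lim_lemma[OF qY])
    fix g assume "g > exp d"
    then obtain \<beta> where "\<beta> \<in> S" "\<beta> < g" using below by blast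
    then have "Re (qform X x) \<le> \<beta> * Re (qform Y x)" using Sdef by blast
    also have "\<dots> \<le> g * Re (qform Y x)" using \<open>\<beta> < g\<close> qY[of x] by (simp add: mult_right_mono)
    finally show "Re (qform X x) \<le> g * Re (qform Y x)" .
  qed
  have c2: "Re (qform Y x) \<le> exp d * Re (qform X x)" for x
  proof (rule lim_lemma[OF qX])
    fix g assume "g > exp d"
    then obtain \<beta> where "\<beta> \<in> S" "\<beta> < g" using below by blast
    then have "Re (qform Y x) \<le> \<beta> * Re (qform X x)" using Sdef by blast
    also have "\<dots> \<le> g * Re (qform X x)" using \<open>\<beta> < g\<close> qX[of x] by (simp add: mult_right_mono)
    finally show "Re (qform Y x) \<le> g * Re (qform X x)" .
  qed
  show ?thesis using d0 c1 c2 psd_comb_iff[OF pX pY] psd_comb_iff[OF pY pX] by blast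
qed

lemma entry_id:
  fixes x y :: complex and a :: real
  shows "(a^2+1) * (cmod (x - y))^2 = (a-1)^2 * ((cmod x)^2 + (cmod y)^2)
     - 2 * Re ((of_real a * y - x) * cnj (of_real a * x - y))"
proof -
  have e1: "(cmod (x - y))^2 = (Re x - Re y)^2 + (Im x - Im y)^2" by (simp add: cmod_power2)
  have e2: "Re ((of_real a * y - x) * cnj (of_real a * x - y)) =
     (a * Re y - Re x) * (a * Re x - Re y) + (a * Im y - Im x) * (a * Im x - Im y)" by (simp add: algebra_simps)
  have e3: "(cmod x)^2 = Re x^2 + Im x^2" "(cmod y)^2 = Re y^2 + Im y^2" by (simp_all add: cmod_power2)
  show ?thesis unfolding e1 e2 e3 by algebra
qed


lemma frob_sq: "(frob A)^2 = (\<Sum>i\<in>UNIV. \<Sum>j\<in>UNIV. (cmod (A $ i $ j))\<^sup>2)"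
  unfolding frob_def by (simp add: sum_nonneg)

theorem mainTheorem2:
  fixes X Y :: "complex^'n^'n" and d :: real
  assumes "psd X" and "psd Y"
    and "thompson X Y = ereal d"
  shows "frob (X - Y) \<le> (exp d - 1) / sqrt (exp (2*d) + 1) * sqrt ((frob X)\<^sup>2 + (frob Y)\<^sup>2)
       \<and> (exp d - 1) / sqrt (exp (2*d) + 1) * sqrt ((frob X)\<^sup>2 + (frob Y)\<^sup>2)
           \<le> sqrt 2 * ((exp d - 1) / sqrt (exp (2*d) + 1)) * max (frob X) (frob Y)"
proof -
  have at: "d \<ge> 0 \<and> psd (exp d *\<^sub>R Y - X) \<and> psd (exp d *\<^sub>R X - Y)"
    using attain[OF assms] .
  define a where "a = exp d"
  have a1: "a \<ge> 1" using at by (simp add: a_def)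
  have e2: "exp (2*d) = a^2" by (simp add: a_def exp_double)
  define P where "P = a *\<^sub>R Y - X"
  define R where "R = a *\<^sub>R X - Y"
  have pP: "psd P" and pR: "psd R" using at by (simp_all add: P_def R_def a_def)
  have tr: "Re (\<Sum>i\<in>UNIV. \<Sum>j\<in>UNIV. P$i$j * R$j$i) \<ge> 0" by (rule trace_nonneg[OF pP pR])
  have hR: "R$j$i = cnj (R$i$j)" for i j using pR unfolding psd_def hermitian_def by blast
  define SX where "SX = (\<Sum>i\<in>UNIV. \<Sum>j\<in>UNIV. (cmod (X $ i $ j))\<^sup>2)"
  define SY where "SY = (\<Sum>i\<in>UNIV. \<Sum>j\<in>UNIV. (cmod (Y $ i $ j))\<^sup>2)"
  define D where "D = (\<Sum>i\<in>UNIV. \<Sum>j\<in>UNIV. (cmod ((X - Y) $ i $ j))\<^sup>2)"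
  have "(a^2+1) * D = (\<Sum>i\<in>UNIV. \<Sum>j\<in>UNIV. (a^2+1) * (cmod (X$i$j - Y$i$j))\<^sup>2)"
    unfolding D_def by (simp add: sum_distrib_left)
  also have "\<dots> = (\<Sum>i\<in>UNIV. \<Sum>j\<in>UNIV. (a-1)^2 * ((cmod (X$i$j))^2 + (cmod (Y$i$j))^2)
        - 2 * Re (P$i$j * R$j$i))"
  proof (intro sum.cong refl)
    fix i j
    have "P$i$j = of_real a * Y$i$j - X$i$j" unfolding P_def vector_minus_component comp_scale by simp
    moreover have "R$j$i = cnj (of_real a * X$i$j - Y$i$j)"
      using hR[of j i] unfolding R_def vector_minus_component comp_scale by simp
    ultimately show "(a^2+1) * (cmod (X$i$j - Y$i$j))\<^sup>2 = (a-1)^2 * ((cmod (X$i$j))^2 + (cmod (Y$i$j))^2)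
        - 2 * Re (P$i$j * R$j$i)" using entry_id[of a "X$i$j" "Y$i$j"] by simp
  qed
  also have "\<dots> = (a-1)^2 * (SX + SY) - 2 * Re (\<Sum>i\<in>UNIV. \<Sum>j\<in>UNIV. P$i$j * R$j$i)"
    unfolding SX_def SY_def Re_sum
    by (simp add: sum_subtractf sum.distrib sum_distrib_left distrib_left)
  finally have "(a^2+1) * D \<le> (a-1)^2 * (SX + SY)" using tr by simp
  moreover have ap: "a^2+1 > 0" by (smt (verit) zero_le_power2)
  ultimately have Dle: "D \<le> (a-1)^2 / (a^2+1) * (SX + SY)"
    by (simp add: field_simps)
  have SXY: "SX + SY = (frob X)^2 + (frob Y)^2" by (simp add: frob_sq SX_def SY_def)
  have "frob (X - Y) = sqrt D" by (simp add: frob_def D_def)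
  also have "\<dots> \<le> sqrt ((a-1)^2 / (a^2+1) * (SX + SY))" using Dle by simp
  also have "\<dots> = (a - 1) / sqrt (a^2 + 1) * sqrt ((frob X)^2 + (frob Y)^2)"
    using a1 by (simp add: SXY real_sqrt_mult real_sqrt_divide)
  finally have part1: "frob (X - Y) \<le> (a - 1) / sqrt (a^2 + 1) * sqrt ((frob X)^2 + (frob Y)^2)" .
  have c0: "(a - 1) / sqrt (a^2 + 1) \<ge> 0" using a1 by simp
  have fx: "frob X \<ge> 0" "frob Y \<ge> 0" by (simp_all add: frob_def sum_nonneg)
  define m where "m = max (frob X) (frob Y)"
  have m0: "m \<ge> 0" using fx by (simp add: m_def)
  have "(frob X)^2 \<le> m^2" "(frob Y)^2 \<le> m^2" using fx by (simp_all add: m_def power_mono)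
  then have "(frob X)^2 + (frob Y)^2 \<le> 2 * m^2" by simp
  then have "sqrt ((frob X)^2 + (frob Y)^2) \<le> sqrt (2 * m^2)" by (rule real_sqrt_le_mono)
  also have "\<dots> = sqrt 2 * m" using m0 by (simp add: real_sqrt_mult)
  finally have "sqrt ((frob X)^2 + (frob Y)^2) \<le> sqrt 2 * max (frob X) (frob Y)" by (simp add: m_def)
  then have part2: "(a - 1) / sqrt (a^2 + 1) * sqrt ((frob X)^2 + (frob Y)^2)
      \<le> sqrt 2 * ((a - 1) / sqrt (a^2 + 1)) * max (frob X) (frob Y)"
    using mult_left_mono[OF _ c0] by (simp add: mult.assoc mult.left_commute)
  show ?thesis using part1 part2 by (simp add: e2 a_def)
qed


end
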